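(* For all pairwise distinct $j,l,k\in\{1,\dots,M\}$, almost surely $$\big|\mathbb E\{g_{lk}(\boldsymbol X)-g_l(\boldsymbol X)-g_k(\boldsymbol X)\mid\boldsymbol X_{\mathcal X(\{l,j\})}\}\big|\le\frac{8\delta_0\sqrt{\mathbb E[f(\boldsymbol X)^2]}}{p_{\min}}.$$
   Context: Setup. $\boldsymbol X=(X_1,\dots,X_p)^\top$ is a random vector in $\{0,1\}^p$; $\{1,\dots,p\}$ is partitioned into disjoint nonempty feature groups $\mathcal X(1),\dots,\mathcal X(M)$; a group is either a single feature or has $\#\mathcal X(m)>1$ and consists of one-hot indicators ($\sum_{j\in\mathcal X(m)}\mathbf 1\{X_j=1\}=1$ a.s.). $\mathcal X(J)=\bigcup_{m\in J}\mathcal X(m)$; $\boldsymbol X_H=(X_j)_{j\in H}$, $\boldsymbol X_{-H}=(X_j)_{j\notin H}$. Conditional expectations given null events are set to $0$. $p_{\min}=\min_{1\le l<k\le M,\,i\in\mathcal X(l),\,j\in\mathcal X(k),\,(a,b)\in\{0,1\}^2}\mathbb P(X_i=a,X_j=b)>0$; $\delta_0=\max_{1\le m\le M}\inf\{\delta\ge0:\mathbb P(\max_{i\in\mathcal X(m)}|\mathbb P(X_i=1\mid\boldsymbol X_{-\mathcal X(m)})-\mathbb P(X_i=1)|\le\delta)=1\}$. For $f:\{0,1\}^p\to\mathbb R$ and $J\subset\{1,\dots,M\}$, $g_J(\boldsymbol X)=\mathbb E(f(\boldsymbol X)-\mathbb E(f(\boldsymbol X)\mid\boldsymbol X_{-\mathcal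 X(J)})\mid\boldsymbol X_{\mathcal X(J)})$, with $g_m=g_{\{m\}}$ and $g_{lk}=g_{\{l,k\}}$. *)

theory Defs
  imports "HOL-Probability.Probability"
begin

text \<open>Features are indexed by a finite type 'n (p = CARD('n)); a realisation of X is
  a vector x :: 'n \<Rightarrow> bool (True = 1). Groups are indexed by a
  finite type 'm (M = CARD('m)); grp i is the group of feature i, so the groups are
  the fibres of grp, which partition the features.\<close>

definition agree :: "'n set \<Rightarrow> ('n \<Rightarrow> bool) \<Rightarrow> ('n \<Rightarrow> bool) set" where
  "agree H x = {y. \<forall>i\<in>H. y i = x i}"

text \<open>Elementary conditional expectation E(Y(X) | X_H) evaluated at X = x; set to 0 on null events.\<close>
definition cond_exp :: "('n::finite \<Rightarrow> bool) pmf \<Rightarrow> 'n set \<Rightarrow> (('n \<Rightarrow> bool) \<Rightarrow> real)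
    \<Rightarrow> ('n \<Rightarrow> bool) \<Rightarrow> real" where
  "cond_exp mu H Y x =
     (if measure_pmf.prob mu (agree H x) = 0 then 0
      else (\<Sum>y\<in>agree H x. pmf mu y * Y y) / measure_pmf.prob mu (agree H x))"

definition gJ :: "('n::finite \<Rightarrow> bool) pmf \<Rightarrow> ('n \<Rightarrow> 'm) \<Rightarrow> (('n \<Rightarrow> bool) \<Rightarrow> real)
    \<Rightarrow> 'm set \<Rightarrow> ('n \<Rightarrow> bool) \<Rightarrow> real" where
  "gJ mu grp f J =
     cond_exp mu (grp -` J) (\<lambda>y. f y - cond_exp mu (- (grp -` J)) f y)"

definition pmin :: "('n::finite \<Rightarrow> bool) pmf \<Rightarrow> ('n \<Rightarrow> 'm) \<Rightarrow> real" where
  "pmin mu grp = Min {measure_pmf.prob mu {x. x i = a \<and> x j = b} | i j a b.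
                        grp i \<noteq> grp j}"

text \<open>delta_0 = max over groups m of the essential supremum of
  max_{i in X(m)} |P(X_i = 1 | X_{-X(m)}) - P(X_i = 1)|, written as the infimum in the paper.\<close>
definition dev :: "('n::finite \<Rightarrow> bool) pmf \<Rightarrow> ('n \<Rightarrow> 'm) \<Rightarrow> 'm \<Rightarrow> ('n \<Rightarrow> bool) \<Rightarrow> real" where
  "dev mu grp m x = Max ((\<lambda>i. \<bar>cond_exp mu (- (grp -` {m})) (\<lambda>y. if y i then 1 else 0) x
                              - measure_pmf.prob mu {y. y i}\<bar>) ` (grp -` {m}))"

definition delta0 :: "('n::finite \<Rightarrow> bool) pmf \<Rightarrow> ('n \<Rightarrow> 'm::finite) \<Rightarrow> real" where
  "delta0 mu grp = Max ((\<lambda>m. Inf {\<delta>. \<delta> \<ge> 0 \<and>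
        measure_pmf.prob mu {x. dev mu grp m x \<le> \<delta>} = 1}) ` UNIV)"

end

theory Submission
  imports Defs
begin

definition PR :: "('n::finite \<Rightarrow> bool) pmf \<Rightarrow> ('n \<Rightarrow> bool) set \<Rightarrow> real" where
  "PR mu A = (\<Sum>x\<in>A. pmf mu x)"
definition EE :: "('n::finite \<Rightarrow> bool) pmf \<Rightarrow> (('n \<Rightarrow> bool) \<Rightarrow> real) \<Rightarrow> real" where
  "EE mu h = (\<Sum>x\<in>UNIV. pmf mu x * h x)"
definition loc :: "'n set \<Rightarrow> (('n \<Rightarrow> bool) \<Rightarrow> real) \<Rightarrow> bool" where
  "loc H q \<longleftrightarrow> (\<forall>x y. (\<forall>i\<in>H. x i = y i) \<longrightarrow> q x = q y)"

lemma prob_PR: "measure_pmf.prob mu A = PR mu A"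
  unfolding PR_def by (rule measure_measure_pmf_finite) simp

lemma exp_EE: "measure_pmf.expectation mu h = EE mu h"
  unfolding EE_def by (subst integral_measure_pmf_real[of UNIV]) (auto simp: mult.commute)

lemma ce_def: "cond_exp mu H h x = (if PR mu (agree H x) = 0 then 0
      else (\<Sum>y\<in>agree H x. pmf mu y * h y) / PR mu (agree H x))"
  unfolding cond_exp_def prob_PR ..

lemma PR_nonneg: "PR mu A \<ge> 0" unfolding PR_def by (simp add: sum_nonneg)

lemma PR_mono: "A \<subseteq> B \<Longrightarrow> PR mu A \<le> PR mu B"
  unfolding PR_def by (rule sum_mono2) auto

lemma PR_UNIV: "PR mu UNIV = 1" unfolding PR_def by (rule sum_pmf_eq_1) auto

lemma PR_supp: "PR mu A = PR mu (A \<inter> set_pmf mu)"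
  unfolding PR_def by (rule sum.mono_neutral_right) (auto simp: set_pmf_iff)

lemma PR_single: "PR mu {x} = pmf mu x" unfolding PR_def by simp

lemma PR_zero_pt: "PR mu A = 0 \<Longrightarrow> x \<in> A \<Longrightarrow> pmf mu x = 0"
  using PR_mono[of "{x}" A mu] PR_single[of mu x] pmf_nonneg[of mu x] by auto

lemma PR_pos_ex: "PR mu A \<noteq> 0 \<Longrightarrow> \<exists>x\<in>A. x \<in> set_pmf mu"
proof (rule ccontr)
  assume a: "PR mu A \<noteq> 0" "\<not> (\<exists>x\<in>A. x \<in> set_pmf mu)"
  hence "A \<inter> set_pmf mu = {}" by blast
  hence "PR mu A = 0" using PR_supp[of mu A] by (simp add: PR_def)
  thus False using a by simp
qed

lemma PR_diff: "PR mu (A - B) = PR mu A - PR mu (A \<inter> B)"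
proof -
  have "PR mu A = PR mu (A - B) + PR mu (A \<inter> B)"
    unfolding PR_def by (subst sum.union_disjoint[symmetric]) (auto intro!: sum.cong)
  thus ?thesis by simp
qed

lemma agree_refl: "x \<in> agree H x" unfolding agree_def by auto

lemma agree_eq: "y \<in> agree H x \<Longrightarrow> agree H y = agree H x"
  unfolding agree_def by auto

lemma agree_sub: "H \<subseteq> H' \<Longrightarrow> agree H' x \<subseteq> agree H x"
  unfolding agree_def by auto

lemma agree_cap: "agree H a \<inter> agree (- H) b = {(\<lambda>i. if i \<in> H then a i else b i)}"
  unfolding agree_def by auto

lemma ce_loc: "loc H (cond_exp mu H h)"
  unfolding loc_def
proof (intro allI impI)
  fix x y :: "'a \<Rightarrow> bool" assume "\<forall>i\<in>H. x i = y i"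
  hence "agree H x = agree H y" unfolding agree_def by auto
  thus "cond_exp mu H h x = cond_exp mu H h y" unfolding cond_exp_def by simp
qed

lemma loc_mono: "loc H q \<Longrightarrow> H \<subseteq> H' \<Longrightarrow> loc H' q"
  unfolding loc_def by blast

lemma ce_self: "loc H q \<Longrightarrow> PR mu (agree H x) \<noteq> 0 \<Longrightarrow> cond_exp mu H q x = q x"
proof -
  assume l: "loc H q" and p: "PR mu (agree H x) \<noteq> 0"
  have "(\<Sum>y\<in>agree H x. pmf mu y * q y) = (\<Sum>y\<in>agree H x. pmf mu y * q x)"
    using l unfolding loc_def agree_def by (intro sum.cong) auto
  also have "\<dots> = PR mu (agree H x) * q x" unfolding PR_def by (simp add: sum_distrib_right)
  finally show ?thesis using p by (simp add: ce_def)
qed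

lemma ce_diff: "cond_exp mu H (\<lambda>y. a y - b y) x = cond_exp mu H a x - cond_exp mu H b x"
  by (simp add: ce_def sum_subtractf right_diff_distrib diff_divide_distrib)

lemma ce_cong: "(\<And>y. y \<in> set_pmf mu \<Longrightarrow> a y = b y) \<Longrightarrow> cond_exp mu H a x = cond_exp mu H b x"
proof -
  assume a: "\<And>y. y \<in> set_pmf mu \<Longrightarrow> a y = b y"
  have "(\<Sum>y\<in>agree H x. pmf mu y * a y) = (\<Sum>y\<in>agree H x. pmf mu y * b y)"
    by (rule sum.cong) (auto, metis a mult_zero_left set_pmf_iff)
  thus ?thesis unfolding ce_def by simp
qed

lemma ce_bound: assumes "\<And>y. y \<in> set_pmf mu \<Longrightarrow> \<bar>q y\<bar> \<le> B" "0 \<le> B"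
  shows "\<bar>cond_exp mu H q x\<bar> \<le> B"
proof (cases "PR mu (agree H x) = 0")
  case True thus ?thesis using assms by (simp add: ce_def)
next
  case False
  have "\<bar>\<Sum>y\<in>agree H x. pmf mu y * q y\<bar> \<le> (\<Sum>y\<in>agree H x. pmf mu y * B)"
  proof -
    have "\<bar>\<Sum>y\<in>agree H x. pmf mu y * q y\<bar> \<le> (\<Sum>y\<in>agree H x. \<bar>pmf mu y * q y\<bar>)" by (rule sum_abs)
    also have "\<dots> \<le> (\<Sum>y\<in>agree H x. pmf mu y * B)"
    proof (rule sum_mono)
      fix y show "\<bar>pmf mu y * q y\<bar> \<le> pmf mu y * B"
        using assms(1)[of y] by (cases "y \<in> set_pmf mu") (auto simp: abs_mult set_pmf_iff intro: mult_left_mono)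
    qed
    finally show ?thesis .
  qed
  also have "\<dots> = PR mu (agree H x) * B" unfolding PR_def by (simp add: sum_distrib_right)
  finally show ?thesis using False PR_nonneg[of mu "agree H x"]
    by (simp add: ce_def abs_divide pos_divide_le_eq mult.commute)
qed

lemma tower_sum: assumes "H \<subseteq> H'"
  shows "(\<Sum>y\<in>agree H x. pmf mu y * cond_exp mu H' h y) = (\<Sum>y\<in>agree H x. pmf mu y * h y)"
proof -
  let ?A = "agree H x" and ?B = "\<lambda>y. agree H' y"
  let ?F = "\<lambda>y z. pmf mu y * pmf mu z * h z / PR mu (?B z)"
  have s1: "pmf mu y * cond_exp mu H' h y = (\<Sum>z\<in>?B y. ?F y z)" for y
  proof (cases "PR mu (?B y) = 0")
    case True
    hence "pmf mu y = 0" using PR_zero_pt agree_refl by metis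
    thus ?thesis by simp
  next
    case False
    have "(\<Sum>z\<in>?B y. ?F y z) = (\<Sum>z\<in>?B y. pmf mu y * pmf mu z * h z / PR mu (?B y))"
      by (intro sum.cong refl) (simp add: agree_eq)
    also have "\<dots> = pmf mu y * ((\<Sum>z\<in>?B y. pmf mu z * h z) / PR mu (?B y))"
      by (simp add: sum_divide_distrib sum_distrib_left mult.assoc)
    finally show ?thesis using False by (simp add: ce_def)
  qed
  have "(\<Sum>y\<in>?A. pmf mu y * cond_exp mu H' h y) = (\<Sum>y\<in>?A. \<Sum>z\<in>{z. z \<in> UNIV \<and> z \<in> ?B y}. ?F y z)"
    using s1 by simp
  also have "\<dots> = (\<Sum>z\<in>UNIV. \<Sum>y\<in>{y. y \<in> ?A \<and> z \<in> ?B y}. ?F y z)"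
    by (rule sum.swap_restrict) auto
  also have "\<dots> = (\<Sum>z\<in>UNIV. if z \<in> ?A then (\<Sum>y\<in>?B z. ?F y z) else 0)"
  proof (rule sum.cong[OF refl])
    fix z
    have "{y. y \<in> ?A \<and> z \<in> ?B y} = (if z \<in> ?A then ?B z else {})"
      using assms unfolding agree_def by auto
    thus "(\<Sum>y\<in>{y. y \<in> ?A \<and> z \<in> ?B y}. ?F y z) = (if z \<in> ?A then (\<Sum>y\<in>?B z. ?F y z) else 0)"
      by simp
  qed
  also have "\<dots> = (\<Sum>z\<in>?A. \<Sum>y\<in>?B z. ?F y z)"
    by (simp add: sum.If_cases)
  also have "\<dots> = (\<Sum>z\<in>?A. pmf mu z * h z)"
  proof (rule sum.cong[OF refl])
    fix z
    have "(\<Sum>y\<in>?B z. ?F y z) = PR mu (?B z) * (pmf mu z * h z) / PR mu (?B z)"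
      unfolding PR_def by (simp add: sum_divide_distrib[symmetric] sum_distrib_right mult.assoc)
    also have "\<dots> = pmf mu z * h z"
      using PR_zero_pt[of mu "?B z" z] agree_refl[of z H'] by (cases "PR mu (?B z) = 0") auto
    finally show "(\<Sum>y\<in>?B z. ?F y z) = pmf mu z * h z" .
  qed
  finally show ?thesis .
qed

lemma tower: assumes "H \<subseteq> H'" shows "cond_exp mu H (cond_exp mu H' h) x = cond_exp mu H h x"
  unfolding ce_def[of mu H] using tower_sum[OF assms] by simp

lemma ce_empty: "cond_exp mu {} q x = EE mu q"
proof -
  have "agree {} x = UNIV" unfolding agree_def by auto
  thus ?thesis by (simp add: ce_def PR_UNIV EE_def)
qed

lemma EE_ce: "EE mu (cond_exp mu H h) = EE mu h"
proof -
  have "cond_exp mu {} (cond_exp mu H h) undefined = cond_exp mu {} h undefined" by (rule tower) simp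
  thus ?thesis by (simp add: ce_empty)
qed

lemma EE_diff: "EE mu (\<lambda>x. a x - b x) = EE mu a - EE mu b"
  unfolding EE_def by (simp add: sum_subtractf right_diff_distrib)

lemma EE_mono: "(\<And>x. a x \<le> b x) \<Longrightarrow> EE mu a \<le> EE mu b"
  unfolding EE_def by (intro sum_mono mult_left_mono) auto

lemma ce_abs: "\<bar>cond_exp mu H h x\<bar> \<le> cond_exp mu H (\<lambda>y. \<bar>h y\<bar>) x"
proof (cases "PR mu (agree H x) = 0")
  case True thus ?thesis by (simp add: ce_def)
next
  case False
  have "\<bar>\<Sum>y\<in>agree H x. pmf mu y * h y\<bar> \<le> (\<Sum>y\<in>agree H x. pmf mu y * \<bar>h y\<bar>)"
    using sum_abs[of "\<lambda>y. pmf mu y * h y"] by (simp add: abs_mult)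
  thus ?thesis using False PR_nonneg[of mu "agree H x"]
    by (simp add: ce_def abs_divide divide_right_mono)
qed

lemma EE_abs_ce: "EE mu (\<lambda>x. \<bar>cond_exp mu H h x\<bar>) \<le> EE mu (\<lambda>x. \<bar>h x\<bar>)"
proof -
  have "EE mu (\<lambda>x. \<bar>cond_exp mu H h x\<bar>) \<le> EE mu (cond_exp mu H (\<lambda>y. \<bar>h y\<bar>))"
    by (rule EE_mono) (rule ce_abs)
  thus ?thesis by (simp add: EE_ce)
qed

lemma EE_abs_diff: "EE mu (\<lambda>x. \<bar>a x - b x\<bar>) \<le> EE mu (\<lambda>x. \<bar>a x\<bar>) + EE mu (\<lambda>x. \<bar>b x\<bar>)"
proof -
  have "EE mu (\<lambda>x. \<bar>a x - b x\<bar>) \<le> EE mu (\<lambda>x. \<bar>a x\<bar> + \<bar>b x\<bar>)" by (rule EE_mono) simp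
  thus ?thesis unfolding EE_def by (simp add: distrib_left sum.distrib)
qed

lemma EE_abs_resid: "EE mu (\<lambda>x. \<bar>f x - cond_exp mu H f x\<bar>) \<le> 2 * EE mu (\<lambda>x. \<bar>f x\<bar>)"
  using EE_abs_diff[of mu f "cond_exp mu H f"] EE_abs_ce[of mu H f] by simp

lemma EE_abs_sqrt: "EE mu (\<lambda>x. \<bar>f x\<bar>) \<le> sqrt (EE mu (\<lambda>x. (f x)^2))"
proof -
  let ?c = "EE mu (\<lambda>x. \<bar>f x\<bar>)"
  have one: "(\<Sum>x\<in>UNIV. pmf mu x) = 1" by (rule sum_pmf_eq_1) auto
  have "0 \<le> (\<Sum>x\<in>UNIV. pmf mu x * (\<bar>f x\<bar> - ?c)^2)" by (intro sum_nonneg) auto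
  also have "\<dots> = (\<Sum>x\<in>UNIV. pmf mu x * (f x)^2) - 2 * ?c * (\<Sum>x\<in>UNIV. pmf mu x * \<bar>f x\<bar>) + ?c^2 * (\<Sum>x\<in>UNIV. pmf mu x)"
    by (simp add: power2_eq_square algebra_simps sum.distrib sum_subtractf sum_distrib_left sum_distrib_right)
  also have "\<dots> = EE mu (\<lambda>x. (f x)^2) - ?c^2" using one unfolding EE_def by (simp add: power2_eq_square)
  finally have "?c^2 \<le> EE mu (\<lambda>x. (f x)^2)" by simp
  thus ?thesis by (simp add: real_le_rsqrt)
qed


definition TT :: "('n \<Rightarrow> 'm) \<Rightarrow> 'm \<Rightarrow> ('n \<Rightarrow> bool) set" where
  "TT grp m = {t. \<forall>i. grp i \<noteq> m \<longrightarrow> \<not> t i}"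
definition mrg :: "('n \<Rightarrow> 'm) \<Rightarrow> 'm \<Rightarrow> ('n \<Rightarrow> bool) \<Rightarrow> ('n \<Rightarrow> bool) \<Rightarrow> ('n \<Rightarrow> bool)" where
  "mrg grp m t y = (\<lambda>i. if grp i = m then t i else y i)"

lemma part_T:
  fixes phi :: "('n::finite \<Rightarrow> bool) \<Rightarrow> real"
  shows "(\<Sum>t\<in>TT grp m. \<Sum>v\<in>agree (grp -` {m}) t. phi v) = (\<Sum>v\<in>UNIV. phi v)"
proof -
  have "(\<Sum>t\<in>TT grp m. \<Sum>v\<in>agree (grp -` {m}) t. phi v) = sum phi (\<Union>t\<in>TT grp m. agree (grp -` {m}) t)"
  proof (rule sum.UNION_disjoint[symmetric])
    show "\<forall>i\<in>TT grp m. \<forall>j\<in>TT grp m. i \<noteq> j \<longrightarrow> agree (grp -` {m}) i \<inter> agree (grp -` {m}) j = {}"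
    proof (intro ballI impI)
      fix t t' assume t: "t \<in> TT grp m" "t' \<in> TT grp m" "t \<noteq> t'"
      then obtain i where "t i \<noteq> t' i" by blast
      moreover have "grp i = m" using t calculation unfolding TT_def by blast
      ultimately show "agree (grp -` {m}) t \<inter> agree (grp -` {m}) t' = {}" unfolding agree_def by auto
    qed
  qed auto
  also have "(\<Union>t\<in>TT grp m. agree (grp -` {m}) t) = UNIV"
  proof -
    have "v \<in> agree (grp -` {m}) (\<lambda>i. grp i = m \<and> v i)" "(\<lambda>i. grp i = m \<and> v i) \<in> TT grp m" for v
      unfolding agree_def TT_def by auto
    thus ?thesis by blast
  qed
  finally show ?thesis .
qed

lemma part_H:
  fixes phi :: "('n::finite \<Rightarrow> bool) \<Rightarrow> real"
  shows "(\<Sum>z\<in>agree H x. \<Sum>v\<in>agree (-H) z. phi v) = (\<Sum>v\<in>UNIV. phi v)"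
proof -
  have "(\<Sum>z\<in>agree H x. \<Sum>v\<in>agree (-H) z. phi v) = sum phi (\<Union>z\<in>agree H x. agree (-H) z)"
  proof (rule sum.UNION_disjoint[symmetric])
    show "\<forall>i\<in>agree H x. \<forall>j\<in>agree H x. i \<noteq> j \<longrightarrow> agree (-H) i \<inter> agree (-H) j = {}"
    proof (intro ballI impI)
      fix t t' assume t: "t \<in> agree H x" "t' \<in> agree H x" "t \<noteq> t'"
      then obtain i where "t i \<noteq> t' i" by blast
      moreover have "i \<notin> H" using t calculation unfolding agree_def by auto
      ultimately show "agree (-H) t \<inter> agree (-H) t' = {}" unfolding agree_def by auto
    qed
  qed auto
  also have "(\<Union>z\<in>agree H x. agree (-H) z) = UNIV"
  proof -
    have "v \<in> agree (-H) (\<lambda>i. if i \<in> H then x i else v i)" "(\<lambda>i. if i \<in> H then x i else v i) \<in> agree H x" for v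
      unfolding agree_def by auto
    thus ?thesis by blast
  qed
  finally show ?thesis .
qed

lemma agree_mrg: "agree (grp -` {m}) t \<inter> agree (- (grp -` {m})) y = {mrg grp m t y}"
  using agree_cap[of "grp -` {m}" t y] unfolding mrg_def by simp

lemma PR_int_zero: "PR mu A = 0 \<Longrightarrow> PR mu (A \<inter> B) = 0"
  using PR_mono[of "A \<inter> B" A mu] PR_nonneg[of mu "A \<inter> B"] by auto

lemma devB:
  fixes mu :: "('n::finite \<Rightarrow> bool) pmf" and grp :: "'n \<Rightarrow> 'm"
  assumes D: "\<And>t. \<bar>PR mu (agree (grp -` {m}) t \<inter> agree (- (grp -` {m})) y) / PR mu (agree (- (grp -` {m})) y)
                 - PR mu (agree (grp -` {m}) t)\<bar> \<le> d"
    and py: "PR mu (agree (- (grp -` {m})) y) \<noteq> 0"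
  shows "\<bar>cond_exp mu (- (grp -` {m})) h y - (\<Sum>t\<in>TT grp m. PR mu (agree (grp -` {m}) t) * h (mrg grp m t y))\<bar>
          \<le> d * (\<Sum>t\<in>{t\<in>TT grp m. PR mu (agree (grp -` {m}) t) \<noteq> 0}. \<bar>h (mrg grp m t y)\<bar>)"
proof -
  let ?G = "grp -` {m}" let ?A = "agree (- ?G) y"
  have "(\<Sum>z\<in>?A. pmf mu z * h z) = (\<Sum>v\<in>UNIV. if v \<in> ?A then pmf mu v * h v else 0)"
    by (simp add: sum.If_cases)
  also have "\<dots> = (\<Sum>t\<in>TT grp m. \<Sum>v\<in>agree ?G t. if v \<in> ?A then pmf mu v * h v else 0)"
    by (rule part_T[symmetric])
  also have "\<dots> = (\<Sum>t\<in>TT grp m. PR mu (agree ?G t \<inter> ?A) * h (mrg grp m t y))"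
  proof (rule sum.cong[OF refl])
    fix t
    have "(\<Sum>v\<in>agree ?G t. if v \<in> ?A then pmf mu v * h v else 0) = (\<Sum>v\<in>agree ?G t \<inter> ?A. pmf mu v * h v)"
      by (simp add: sum.inter_restrict)
    also have "\<dots> = PR mu (agree ?G t \<inter> ?A) * h (mrg grp m t y)"
      unfolding agree_mrg PR_def by simp
    finally show "(\<Sum>v\<in>agree ?G t. if v \<in> ?A then pmf mu v * h v else 0) = PR mu (agree ?G t \<inter> ?A) * h (mrg grp m t y)" .
  qed
  finally have ce: "cond_exp mu (- ?G) h y = (\<Sum>t\<in>TT grp m. PR mu (agree ?G t \<inter> ?A) / PR mu ?A * h (mrg grp m t y))"
    using py by (simp add: ce_def sum_divide_distrib)
  have "\<bar>cond_exp mu (- ?G) h y - (\<Sum>t\<in>TT grp m. PR mu (agree ?G t) * h (mrg grp m t y))\<bar>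
      = \<bar>\<Sum>t\<in>TT grp m. (PR mu (agree ?G t \<inter> ?A) / PR mu ?A - PR mu (agree ?G t)) * h (mrg grp m t y)\<bar>"
    unfolding ce by (simp add: sum_subtractf left_diff_distrib)
  also have "\<dots> \<le> (\<Sum>t\<in>TT grp m. \<bar>(PR mu (agree ?G t \<inter> ?A) / PR mu ?A - PR mu (agree ?G t)) * h (mrg grp m t y)\<bar>)"
    by (rule sum_abs)
  also have "\<dots> \<le> (\<Sum>t\<in>TT grp m. if PR mu (agree ?G t) \<noteq> 0 then d * \<bar>h (mrg grp m t y)\<bar> else 0)"
  proof (rule sum_mono)
    fix t show "\<bar>(PR mu (agree ?G t \<inter> ?A) / PR mu ?A - PR mu (agree ?G t)) * h (mrg grp m t y)\<bar>
        \<le> (if PR mu (agree ?G t) \<noteq> 0 then d * \<bar>h (mrg grp m t y)\<bar> else 0)"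
      using D[of t] PR_int_zero[of mu "agree ?G t" ?A]
      by (auto simp: abs_mult intro: mult_right_mono)
  qed
  also have "\<dots> = d * (\<Sum>t\<in>{t\<in>TT grp m. PR mu (agree ?G t) \<noteq> 0}. \<bar>h (mrg grp m t y)\<bar>)"
    by (simp add: sum.inter_filter[symmetric] sum_distrib_left)
  finally show ?thesis .
qed

lemma devC:
  fixes mu :: "('n::finite \<Rightarrow> bool) pmf"
  assumes D: "\<And>z. PR mu (agree (-G) z) \<noteq> 0 \<Longrightarrow>
       \<bar>PR mu (agree G x \<inter> agree (-G) z) / PR mu (agree (-G) z) - PR mu (agree G x)\<bar> \<le> d"
    and px: "PR mu (agree G x) \<noteq> 0"
    and lw: "loc (-G) w" and ew: "EE mu w = 0"
  shows "\<bar>cond_exp mu G w x\<bar> * PR mu (agree G x) \<le> d * EE mu (\<lambda>v. \<bar>w v\<bar>)"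
proof -
  let ?B = "agree G x" let ?A = "\<lambda>z. agree (-G) z"
  have lw': "v \<in> ?A z \<Longrightarrow> w v = w z" for v z using lw unfolding loc_def agree_def by auto
  have pz: "z \<in> ?B \<Longrightarrow> pmf mu z = PR mu (?B \<inter> ?A z)" for z
  proof -
    assume "z \<in> ?B"
    hence "?B \<inter> ?A z = {z}" using agree_cap[of G x z] unfolding agree_def by auto
    thus ?thesis by (simp add: PR_single)
  qed
  have "0 = EE mu w" using ew by simp
  also have "\<dots> = (\<Sum>z\<in>?B. \<Sum>v\<in>?A z. pmf mu v * w v)" unfolding EE_def by (rule part_H[symmetric])
  also have "\<dots> = (\<Sum>z\<in>?B. PR mu (?A z) * w z)"
    unfolding PR_def by (intro sum.cong refl) (simp add: lw' sum_distrib_right)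
  finally have e0: "(\<Sum>z\<in>?B. PR mu (?A z) * w z) = 0" by simp
  have "cond_exp mu G w x * PR mu ?B = (\<Sum>z\<in>?B. pmf mu z * w z)" using px by (simp add: ce_def)
  also have "\<dots> = (\<Sum>z\<in>?B. PR mu (?B \<inter> ?A z) * w z) - PR mu ?B * (\<Sum>z\<in>?B. PR mu (?A z) * w z)"
    using e0 pz by simp
  also have "\<dots> = (\<Sum>z\<in>?B. (PR mu (?B \<inter> ?A z) - PR mu ?B * PR mu (?A z)) * w z)"
    by (simp add: sum_subtractf left_diff_distrib sum_distrib_left mult.assoc)
  finally have "\<bar>cond_exp mu G w x\<bar> * PR mu ?B = \<bar>\<Sum>z\<in>?B. (PR mu (?B \<inter> ?A z) - PR mu ?B * PR mu (?A z)) * w z\<bar>"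
    using PR_nonneg[of mu ?B] by (metis abs_mult abs_of_nonneg)
  also have "\<dots> \<le> (\<Sum>z\<in>?B. \<bar>(PR mu (?B \<inter> ?A z) - PR mu ?B * PR mu (?A z)) * w z\<bar>)" by (rule sum_abs)
  also have "\<dots> \<le> (\<Sum>z\<in>?B. d * (PR mu (?A z) * \<bar>w z\<bar>))"
  proof (rule sum_mono)
    fix z
    show "\<bar>(PR mu (?B \<inter> ?A z) - PR mu ?B * PR mu (?A z)) * w z\<bar> \<le> d * (PR mu (?A z) * \<bar>w z\<bar>)"
    proof (cases "PR mu (?A z) = 0")
      case True thus ?thesis using PR_int_zero[of mu "?A z" ?B] by (simp add: Int_commute)
    next
      case False
      hence pos: "PR mu (?A z) > 0" using PR_nonneg[of mu "?A z"] by simp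
      have "PR mu (?B \<inter> ?A z) - PR mu ?B * PR mu (?A z)
            = (PR mu (?B \<inter> ?A z) / PR mu (?A z) - PR mu ?B) * PR mu (?A z)"
        using pos by (simp add: field_simps)
      hence "\<bar>PR mu (?B \<inter> ?A z) - PR mu ?B * PR mu (?A z)\<bar> \<le> d * PR mu (?A z)"
        using D[OF False] pos by (simp add: abs_mult mult_right_mono)
      hence "\<bar>PR mu (?B \<inter> ?A z) - PR mu ?B * PR mu (?A z)\<bar> * \<bar>w z\<bar> \<le> (d * PR mu (?A z)) * \<bar>w z\<bar>"
        by (rule mult_right_mono) simp
      thus ?thesis by (simp add: abs_mult mult.assoc)
    qed
  qed
  also have "\<dots> = d * (\<Sum>z\<in>?B. \<Sum>v\<in>?A z. pmf mu v * \<bar>w v\<bar>)"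
    unfolding PR_def by (simp add: sum_distrib_left sum_distrib_right lw')
  also have "\<dots> = d * EE mu (\<lambda>v. \<bar>w v\<bar>)" unfolding EE_def by (simp add: part_H)
  finally show ?thesis .
qed

lemma lemC:
  fixes mu :: "('n::finite \<Rightarrow> bool) pmf"
  assumes K: "grp -` {m} \<subseteq> K" and lh: "loc K h" and pm: "pm > 0"
    and pK: "\<And>t. t \<in> TT grp m \<Longrightarrow> PR mu (agree (grp -` {m}) t) \<noteq> 0 \<Longrightarrow> pm \<le> PR mu (agree K (mrg grp m t y))"
  shows "(\<Sum>t\<in>{t\<in>TT grp m. PR mu (agree (grp -` {m}) t) \<noteq> 0}. \<bar>h (mrg grp m t y)\<bar>) \<le> EE mu (\<lambda>v. \<bar>h v\<bar>) / pm"
proof -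
  let ?G = "grp -` {m}" let ?S = "{t\<in>TT grp m. PR mu (agree ?G t) \<noteq> 0}"
  have "pm * (\<Sum>t\<in>?S. \<bar>h (mrg grp m t y)\<bar>) = (\<Sum>t\<in>?S. pm * \<bar>h (mrg grp m t y)\<bar>)"
    by (simp add: sum_distrib_left)
  also have "\<dots> \<le> (\<Sum>t\<in>?S. \<Sum>v\<in>agree ?G t. pmf mu v * \<bar>h v\<bar>)"
  proof (rule sum_mono)
    fix t assume t: "t \<in> ?S"
    let ?z = "mrg grp m t y"
    have "pm * \<bar>h ?z\<bar> \<le> PR mu (agree K ?z) * \<bar>h ?z\<bar>" using pK t by (auto intro: mult_right_mono)
    also have "\<dots> = (\<Sum>v\<in>agree K ?z. pmf mu v * \<bar>h v\<bar>)"
    proof -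
      have hv: "v \<in> agree K ?z \<Longrightarrow> h v = h ?z" for v using lh unfolding loc_def agree_def by auto
      show ?thesis unfolding PR_def sum_distrib_right by (intro sum.cong refl) (simp add: hv)
    qed
    also have "\<dots> \<le> (\<Sum>v\<in>agree ?G t. pmf mu v * \<bar>h v\<bar>)"
    proof (rule sum_mono2)
      show "agree K ?z \<subseteq> agree ?G t" using K unfolding agree_def mrg_def by auto
    qed auto
    finally show "pm * \<bar>h ?z\<bar> \<le> (\<Sum>v\<in>agree ?G t. pmf mu v * \<bar>h v\<bar>)" .
  qed
  also have "\<dots> \<le> (\<Sum>t\<in>TT grp m. \<Sum>v\<in>agree ?G t. pmf mu v * \<bar>h v\<bar>)"
    by (rule sum_mono2) (auto intro!: sum_nonneg)
  also have "\<dots> = EE mu (\<lambda>v. \<bar>h v\<bar>)" unfolding EE_def by (rule part_T)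
  finally show ?thesis using pm by (simp add: pos_le_divide_eq mult.commute)
qed


lemma loc_diff: fixes a b :: "('n \<Rightarrow> bool) \<Rightarrow> real" shows "loc H a \<Longrightarrow> loc H b \<Longrightarrow> loc H (\<lambda>y. a y - b y)"
  unfolding loc_def
proof (intro allI impI)
  fix x y :: "'n \<Rightarrow> bool" assume a: "\<forall>x y. (\<forall>i\<in>H. x i = y i) \<longrightarrow> a x = a y" and b: "\<forall>x y. (\<forall>i\<in>H. x i = y i) \<longrightarrow> b x = b y"
    and xy: "\<forall>i\<in>H. x i = y i"
  have "a x = a y" using a xy by blast
  moreover have "b x = b y" using b xy by blast
  ultimately show "a x - b x = a y - b y" by simp
qed

lemma PR_pos_supp: "x \<in> set_pmf mu \<Longrightarrow> x \<in> A \<Longrightarrow> PR mu A \<noteq> 0"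
proof
  assume "x \<in> set_pmf mu" "x \<in> A" "PR mu A = 0"
  hence "pmf mu x = 0" "pmf mu x \<noteq> 0" using PR_zero_pt[of mu A x] set_pmf_iff[of x mu] by auto
  thus False by simp
qed

lemma PR_cong_supp: "(\<And>v. v \<in> set_pmf mu \<Longrightarrow> v \<in> A \<longleftrightarrow> v \<in> B) \<Longrightarrow> PR mu A = PR mu B"
proof -
  assume a: "\<And>v. v \<in> set_pmf mu \<Longrightarrow> v \<in> A \<longleftrightarrow> v \<in> B"
  have "A \<inter> set_pmf mu = B \<inter> set_pmf mu" using a by blast
  thus ?thesis using PR_supp[of mu A] PR_supp[of mu B] by simp
qed

lemma ind_ce: "PR mu (agree H y) \<noteq> 0 \<Longrightarrow>
   cond_exp mu H (\<lambda>v. if v i then 1 else 0) y = PR mu ({v. v i} \<inter> agree H y) / PR mu (agree H y)"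
proof -
  assume p: "PR mu (agree H y) \<noteq> 0"
  have "PR mu ({v. v i} \<inter> agree H y) = (\<Sum>v\<in>agree H y. if v \<in> {v. v i} then pmf mu v else 0)"
    unfolding PR_def by (subst Int_commute, rule sum.inter_restrict) simp
  also have "\<dots> = (\<Sum>v\<in>agree H y. pmf mu v * (if v i then 1 else 0))" by (rule sum.cong) auto
  finally show ?thesis using p unfolding ce_def by simp
qed

locale setting =
  fixes mu :: "('n::finite \<Rightarrow> bool) pmf" and grp :: "'n \<Rightarrow> 'm::finite"
  assumes surj: "surj grp"
    and one_hot: "\<And>m. card (grp -` {m}) > 1 \<Longrightarrow> (\<forall>x\<in>set_pmf mu. card {i. grp i = m \<and> x i} = 1)"
    and pmin_pos: "pmin mu grp > 0"
    and two: "\<And>m::'m. \<exists>m'. m' \<noteq> m"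
begin

lemma lit: assumes w: "w \<in> set_pmf mu"
  shows "\<exists>i. grp i = m \<and> (\<forall>v\<in>set_pmf mu. v \<in> agree (grp -` {m}) w \<longleftrightarrow> v i = w i)"
proof -
  have "m \<in> range grp" using surj by simp
  then obtain i0 where i0: "grp i0 = m" by blast
  have ne: "grp -` {m} \<noteq> {}" using i0 by blast
  show ?thesis
  proof (cases "card (grp -` {m}) > 1")
    case False
    moreover have "card (grp -` {m}) > 0" using ne by (simp add: card_gt_0_iff)
    ultimately have "card (grp -` {m}) = 1" by linarith
    then obtain i where gi: "grp -` {m} = {i}" by (rule card_1_singletonE)
    have "grp i = m" using gi by blast
    moreover have "\<forall>v\<in>set_pmf mu. v \<in> agree (grp -` {m}) w \<longleftrightarrow> v i = w i" unfolding gi agree_def by simp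
    ultimately show ?thesis by blast
  next
    case True
    have c: "\<And>x. x \<in> set_pmf mu \<Longrightarrow> card {i. grp i = m \<and> x i} = 1" using one_hot[OF True] by blast
    obtain i where wi: "{i. grp i = m \<and> w i} = {i}" using c[OF w] by (rule card_1_singletonE)
    have gi: "grp i = m" "w i" using wi by blast+
    have "v \<in> agree (grp -` {m}) w \<longleftrightarrow> v i = w i" if v: "v \<in> set_pmf mu" for v
    proof
      assume "v \<in> agree (grp -` {m}) w" thus "v i = w i" using gi unfolding agree_def by simp
    next
      assume vi: "v i = w i"
      obtain i' where vi': "{i. grp i = m \<and> v i} = {i'}" using c[OF v] by (rule card_1_singletonE)
      have "i \<in> {i. grp i = m \<and> v i}" using gi vi by simp
      hence "i = i'" using vi' by blast
      hence "{i. grp i = m \<and> v i} = {i. grp i = m \<and> w i}" using vi' wi by simp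
      hence "\<forall>i'. grp i' = m \<longrightarrow> v i' = w i'" by blast
      thus "v \<in> agree (grp -` {m}) w" unfolding agree_def by simp
    qed
    thus ?thesis using gi by blast
  qed
qed

lemma pmin_le: assumes "grp i \<noteq> grp j" shows "pmin mu grp \<le> PR mu {x. x i = a \<and> x j = b}"
proof -
  let ?X = "{measure_pmf.prob mu {x. x i = a \<and> x j = b} | i j a b. grp i \<noteq> grp j}"
  have "?X \<subseteq> (\<lambda>(i,j,a,b). measure_pmf.prob mu {x. x i = a \<and> x j = b}) ` UNIV"
  proof
    fix r assume "r \<in> ?X"
    then obtain i j a b where "r = measure_pmf.prob mu {x. x i = a \<and> x j = b}" by blast
    thus "r \<in> (\<lambda>(i,j,a,b). measure_pmf.prob mu {x. x i = a \<and> x j = b}) ` UNIV"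
      by (intro image_eqI[where x="(i,j,a,b)"]) auto
  qed
  hence "finite ?X" by (rule finite_subset) simp
  moreover have "measure_pmf.prob mu {x. x i = a \<and> x j = b} \<in> ?X" using assms by blast
  ultimately show ?thesis unfolding pmin_def prob_PR[symmetric] by (rule Min_le)
qed

lemma pm2: assumes "w1 \<in> set_pmf mu" "w2 \<in> set_pmf mu" "m1 \<noteq> m2"
  shows "pmin mu grp \<le> PR mu (agree (grp -` {m1}) w1 \<inter> agree (grp -` {m2}) w2)"
proof -
  obtain i1 where i1: "grp i1 = m1" "\<forall>v\<in>set_pmf mu. v \<in> agree (grp -` {m1}) w1 \<longleftrightarrow> v i1 = w1 i1"
    using lit[OF assms(1), where m=m1] by blast
  obtain i2 where i2: "grp i2 = m2" "\<forall>v\<in>set_pmf mu. v \<in> agree (grp -` {m2}) w2 \<longleftrightarrow> v i2 = w2 i2"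
    using lit[OF assms(2), where m=m2] by blast
  have "pmin mu grp \<le> PR mu {x. x i1 = w1 i1 \<and> x i2 = w2 i2}" by (rule pmin_le) (simp add: i1(1) i2(1) assms(3))
  also have "\<dots> = PR mu (agree (grp -` {m1}) w1 \<inter> agree (grp -` {m2}) w2)"
  proof (rule PR_cong_supp)
    fix v assume v: "v \<in> set_pmf mu"
    show "v \<in> {x. x i1 = w1 i1 \<and> x i2 = w2 i2} \<longleftrightarrow> v \<in> agree (grp -` {m1}) w1 \<inter> agree (grp -` {m2}) w2"
      using i1(2)[rule_format, OF v] i2(2)[rule_format, OF v] by simp
  qed
  finally show ?thesis .
qed

lemma pm1: assumes "PR mu (agree (grp -` {m}) t) \<noteq> 0"
  shows "pmin mu grp \<le> PR mu (agree (grp -` {m}) t)"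
proof -
  obtain w where w: "w \<in> agree (grp -` {m}) t" "w \<in> set_pmf mu" using PR_pos_ex[OF assms] by blast
  obtain m' where m': "m' \<noteq> m" using two by blast
  have "pmin mu grp \<le> PR mu (agree (grp -` {m}) w \<inter> agree (grp -` {m'}) w)" using m' by (intro pm2 w(2)) simp
  also have "\<dots> \<le> PR mu (agree (grp -` {m}) w)" by (rule PR_mono) auto
  finally show ?thesis using agree_eq[OF w(1)] by simp
qed

lemma delta_facts: "x \<in> set_pmf mu \<Longrightarrow> dev mu grp m x \<le> delta0 mu grp" "0 \<le> delta0 mu grp"
proof -
  let ?D = "\<lambda>m. {\<delta>. \<delta> \<ge> 0 \<and> measure_pmf.prob mu {x. dev mu grp m x \<le> \<delta>} = 1}"
  have ne: "?D m \<noteq> {}" for m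
  proof -
    let ?d = "max 0 (Max (range (dev mu grp m)))"
    have "dev mu grp m x \<le> Max (range (dev mu grp m))" for x by (rule Max_ge) auto
    hence "dev mu grp m x \<le> ?d" for x using max.coboundedI2 by blast
    hence "{x. dev mu grp m x \<le> ?d} = UNIV" by blast
    hence "?d \<in> ?D m" by (simp add: prob_PR PR_UNIV)
    thus ?thesis by blast
  qed
  have ge0: "0 \<le> Inf (?D m)" for m by (rule cInf_greatest[OF ne]) auto
  have le: "Inf (?D m) \<le> delta0 mu grp" for m unfolding delta0_def by (rule Max_ge) auto
  show "0 \<le> delta0 mu grp" using ge0 le order_trans by blast
  assume x: "x \<in> set_pmf mu"
  have "dev mu grp m x \<le> Inf (?D m)"
  proof (rule cInf_greatest[OF ne])
    fix d assume "d \<in> ?D m"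
    hence p1: "PR mu {x. dev mu grp m x \<le> d} = 1" by (simp add: prob_PR)
    show "dev mu grp m x \<le> d"
    proof (rule ccontr)
      assume "\<not> dev mu grp m x \<le> d"
      hence "x \<in> UNIV - {x. dev mu grp m x \<le> d}" by simp
      moreover have "PR mu (UNIV - {x. dev mu grp m x \<le> d}) = 0" using PR_diff[of mu UNIV] p1 PR_UNIV by simp
      ultimately have "pmf mu x = 0" by (metis PR_zero_pt)
      thus False using x set_pmf_iff by metis
    qed
  qed
  thus "dev mu grp m x \<le> delta0 mu grp" using le[of m] by linarith
qed

lemma dev_i: assumes "x \<in> set_pmf mu" "grp i = m"
  shows "\<bar>cond_exp mu (- (grp -` {m})) (\<lambda>y. if y i then 1 else 0) x - PR mu {y. y i}\<bar> \<le> delta0 mu grp"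
proof -
  have "\<bar>cond_exp mu (- (grp -` {m})) (\<lambda>y. if y i then 1 else 0) x - PR mu {y. y i}\<bar> \<le> dev mu grp m x"
    unfolding dev_def prob_PR[symmetric] by (rule Max_ge) (use assms in auto)
  thus ?thesis using delta_facts(1)[OF assms(1), where m=m] by linarith
qed

lemma Dm: assumes py: "PR mu (agree (- (grp -` {m})) y) \<noteq> 0"
  shows "\<bar>PR mu (agree (grp -` {m}) t \<inter> agree (- (grp -` {m})) y) / PR mu (agree (- (grp -` {m})) y)
          - PR mu (agree (grp -` {m}) t)\<bar> \<le> delta0 mu grp"
proof (cases "PR mu (agree (grp -` {m}) t) = 0")
  case True thus ?thesis using PR_int_zero[OF True] delta_facts(2) by simp
next
  case False
  let ?G = "grp -` {m}" let ?A = "agree (- ?G) y"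
  obtain w where w: "w \<in> agree ?G t" "w \<in> set_pmf mu" using PR_pos_ex[OF False] by blast
  have gt: "agree ?G t = agree ?G w" using agree_eq[OF w(1)] by simp
  obtain i where i: "grp i = m" "\<forall>v\<in>set_pmf mu. v \<in> agree ?G w \<longleftrightarrow> v i = w i" using lit[OF w(2), where m=m] by blast
  obtain y' where y': "y' \<in> ?A" "y' \<in> set_pmf mu" using PR_pos_ex[OF py] by blast
  have Ay: "agree (- ?G) y' = ?A" using agree_eq[OF y'(1)] .
  have cey: "cond_exp mu (- ?G) (\<lambda>v. if v i then 1 else 0) y' = PR mu ({v. v i} \<inter> ?A) / PR mu ?A"
    using ind_ce[of mu "- ?G" y' i] py Ay by simp
  have dv: "\<bar>PR mu ({v. v i} \<inter> ?A) / PR mu ?A - PR mu {v. v i}\<bar> \<le> delta0 mu grp"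
    using dev_i[OF y'(2) i(1)] cey by simp
  have e1: "PR mu (agree ?G t \<inter> ?A) = PR mu ({v. v i = w i} \<inter> ?A)"
    unfolding gt by (rule PR_cong_supp) (simp add: i(2))
  have e2: "PR mu (agree ?G t) = PR mu {v. v i = w i}"
    unfolding gt by (rule PR_cong_supp) (simp add: i(2))
  show ?thesis
  proof (cases "w i")
    case True thus ?thesis using e1 e2 dv by simp
  next
    case f: False
    have a1: "{v. v i = w i} \<inter> ?A = ?A - {v. v i} \<inter> ?A" using f by auto
    have a2: "{v. v i = w i} = UNIV - {v. v i}" using f by auto
    have q1: "PR mu ({v. v i = w i} \<inter> ?A) = PR mu ?A - PR mu ({v. v i} \<inter> ?A)"
    proof -
      have "?A \<inter> ({v. v i} \<inter> ?A) = {v. v i} \<inter> ?A" by blast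
      thus ?thesis unfolding a1 PR_diff by simp
    qed
    have q2: "PR mu {v. v i = w i} = 1 - PR mu {v. v i}" unfolding a2 PR_diff by (simp add: PR_UNIV)
    have "PR mu (agree ?G t \<inter> ?A) / PR mu ?A - PR mu (agree ?G t)
          = - (PR mu ({v. v i} \<inter> ?A) / PR mu ?A - PR mu {v. v i})"
      unfolding e1 e2 q1 q2 using py by (simp add: diff_divide_distrib)
    thus ?thesis using dv by simp
  qed
qed

end


theorem lemma4:
  fixes mu :: "('n::finite \<Rightarrow> bool) pmf"
    and grp :: "'n \<Rightarrow> 'm::finite"
    and f :: "('n \<Rightarrow> bool) \<Rightarrow> real"
    and j l k :: 'm
  assumes groups_nonempty: "surj grp"
    and one_hot: "\<And>m. card (grp -` {m}) > 1 \<Longrightarrow>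
                    (\<forall>x\<in>set_pmf mu. card {i. grp i = m \<and> x i} = 1)"
    and pmin_pos: "pmin mu grp > 0"
    and distinct: "j \<noteq> l" "l \<noteq> k" "j \<noteq> k"
  shows "AE x in measure_pmf mu.
           \<bar>cond_exp mu (grp -` {l, j})
               (\<lambda>y. gJ mu grp f {l, k} y - gJ mu grp f {l} y - gJ mu grp f {k} y) x\<bar>
           \<le> 8 * delta0 mu grp * sqrt (measure_pmf.expectation mu (\<lambda>y. (f y)\<^sup>2)) / pmin mu grp"
proof -
  have two: "\<exists>m'. m' \<noteq> m" for m :: 'm
  proof (cases "m = j")
    case True show ?thesis by (rule exI[of _ l]) (use True distinct(1) in simp)
  next
    case False show ?thesis by (rule exI[of _ j]) (use False in simp)
  qed
  interpret st: setting mu grp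
    by unfold_locales (fact groups_nonempty, fact one_hot, fact pmin_pos, fact two)
  let ?d = "delta0 mu grp" let ?pm = "pmin mu grp" let ?F = "EE mu (\<lambda>y. \<bar>f y\<bar>)"
  let ?B = "?d * (2 * ?F) / ?pm"
  let ?Gl = "grp -` {l}" let ?Gk = "grp -` {k}" let ?K = "grp -` {l,k}" let ?H = "grp -` {l,j}"
  let ?u = "cond_exp mu (- ?K) f" let ?vl = "cond_exp mu (- ?Gl) f" let ?vk = "cond_exp mu (- ?Gk) f"
  let ?glk = "gJ mu grp f {l,k}" let ?gl = "gJ mu grp f {l}" let ?gk = "gJ mu grp f {k}"
  have glk: "?glk = cond_exp mu ?K (\<lambda>y. f y - ?u y)" by (simp add: gJ_def)
  have gl: "?gl = cond_exp mu ?Gl (\<lambda>y. f y - ?vl y)" by (simp add: gJ_def)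
  have gk: "?gk = cond_exp mu ?Gk (\<lambda>y. f y - ?vk y)" by (simp add: gJ_def)
  have d0: "0 \<le> ?d" by (rule st.delta_facts(2))
  have pm0: "0 < ?pm" by (rule pmin_pos)
  have F0: "0 \<le> ?F" unfolding EE_def by (intro sum_nonneg) auto
  have B0: "0 \<le> ?B" using d0 pm0 F0 by simp
  have HGk: "?H \<subseteq> - ?Gk" using distinct by auto
  have GlGk: "?Gl \<subseteq> - ?Gk" using distinct by auto
  have GlH: "?Gl \<subseteq> ?H" by auto
  have GlK: "?Gl \<subseteq> ?K" by auto
  have GkK: "?Gk \<subseteq> ?K" by auto
  have agk: "agree ?Gk (mrg grp k t y) = agree ?Gk t" for t y unfolding agree_def mrg_def by auto
  have supp_pos: "PR mu (agree A y) \<noteq> 0" if "y \<in> set_pmf mu" for A y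
    using PR_pos_supp[OF that agree_refl] .

  have gkB: "\<bar>cond_exp mu (- ?Gk) ?gk y\<bar> \<le> ?B" if y: "y \<in> set_pmf mu" for y
  proof -
    have lgk: "loc ?Gk ?gk" unfolding gk by (rule ce_loc)
    have dB: "\<bar>cond_exp mu (- ?Gk) ?gk y - (\<Sum>t\<in>TT grp k. PR mu (agree ?Gk t) * ?gk (mrg grp k t y))\<bar>
          \<le> ?d * (\<Sum>t\<in>{t\<in>TT grp k. PR mu (agree ?Gk t) \<noteq> 0}. \<bar>?gk (mrg grp k t y)\<bar>)"
      by (rule devB) (rule st.Dm[OF supp_pos[OF y]], rule supp_pos[OF y])
    have "(\<Sum>t\<in>TT grp k. PR mu (agree ?Gk t) * ?gk (mrg grp k t y))
        = (\<Sum>t\<in>TT grp k. \<Sum>v\<in>agree ?Gk t. pmf mu v * ?gk v)"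
    proof (rule sum.cong[OF refl])
      fix t
      have e1: "?gk (mrg grp k t y) = ?gk t" using lgk unfolding loc_def mrg_def by simp
      have e2: "v \<in> agree ?Gk t \<Longrightarrow> ?gk v = ?gk t" for v using lgk unfolding loc_def agree_def by simp
      show "PR mu (agree ?Gk t) * ?gk (mrg grp k t y) = (\<Sum>v\<in>agree ?Gk t. pmf mu v * ?gk v)"
        unfolding e1 PR_def sum_distrib_right by (rule sum.cong) (simp_all add: e2)
    qed
    also have "\<dots> = EE mu ?gk" unfolding EE_def by (rule part_T)
    also have "\<dots> = 0" unfolding gk EE_ce EE_diff by simp
    finally have s0: "(\<Sum>t\<in>TT grp k. PR mu (agree ?Gk t) * ?gk (mrg grp k t y)) = 0" .
    have sB: "(\<Sum>t\<in>{t\<in>TT grp k. PR mu (agree ?Gk t) \<noteq> 0}. \<bar>?gk (mrg grp k t y)\<bar>) \<le> EE mu (\<lambda>v. \<bar>?gk v\<bar>) / ?pm"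
      by (rule lemC[OF order_refl lgk pm0]) (simp add: agk st.pm1)
    have "EE mu (\<lambda>v. \<bar>?gk v\<bar>) \<le> 2 * ?F"
      using EE_abs_ce[of mu ?Gk "\<lambda>y. f y - ?vk y"] EE_abs_resid[of mu f "- ?Gk"] unfolding gk by linarith
    hence "EE mu (\<lambda>v. \<bar>?gk v\<bar>) / ?pm \<le> 2 * ?F / ?pm" using pm0 by (simp add: divide_right_mono)
    hence "(\<Sum>t\<in>{t\<in>TT grp k. PR mu (agree ?Gk t) \<noteq> 0}. \<bar>?gk (mrg grp k t y)\<bar>) \<le> 2 * ?F / ?pm" using sB by linarith
    hence "?d * (\<Sum>t\<in>{t\<in>TT grp k. PR mu (agree ?Gk t) \<noteq> 0}. \<bar>?gk (mrg grp k t y)\<bar>) \<le> ?d * (2 * ?F / ?pm)"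
      using d0 by (rule mult_left_mono)
    thus ?thesis using dB s0 by simp
  qed

  define mm where "mm = (\<lambda>y. \<Sum>t\<in>TT grp k. PR mu (agree ?Gk t) * ?glk (mrg grp k t y))"
  have lglk: "loc ?K ?glk" unfolding glk by (rule ce_loc)
  have RB: "\<bar>cond_exp mu (- ?Gk) ?glk y - mm y\<bar> \<le> ?B" if y: "y \<in> set_pmf mu" for y
  proof -
    have dB: "\<bar>cond_exp mu (- ?Gk) ?glk y - mm y\<bar>
          \<le> ?d * (\<Sum>t\<in>{t\<in>TT grp k. PR mu (agree ?Gk t) \<noteq> 0}. \<bar>?glk (mrg grp k t y)\<bar>)"
      unfolding mm_def by (rule devB) (rule st.Dm[OF supp_pos[OF y]], rule supp_pos[OF y])
    have sB: "(\<Sum>t\<in>{t\<in>TT grp k. PR mu (agree ?Gk t) \<noteq> 0}. \<bar>?glk (mrg grp k t y)\<bar>) \<le> EE mu (\<lambda>v. \<bar>?glk v\<bar>) / ?pm"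
    proof (rule lemC[OF GkK lglk pm0])
      fix t assume t: "t \<in> TT grp k" "PR mu (agree ?Gk t) \<noteq> 0"
      obtain w where w: "w \<in> agree ?Gk t" "w \<in> set_pmf mu" using PR_pos_ex[OF t(2)] by blast
      have "?pm \<le> PR mu (agree ?Gl y \<inter> agree ?Gk w)" using distinct(2) by (intro st.pm2 y w(2))
      also have "\<dots> \<le> PR mu (agree ?K (mrg grp k t y))"
      proof (rule PR_mono)
        show "agree ?Gl y \<inter> agree ?Gk w \<subseteq> agree ?K (mrg grp k t y)"
          using w(1) distinct(2) unfolding agree_def mrg_def by auto
      qed
      finally show "?pm \<le> PR mu (agree ?K (mrg grp k t y))" .
    qed
    have "EE mu (\<lambda>v. \<bar>?glk v\<bar>) \<le> 2 * ?F"
      using EE_abs_ce[of mu ?K "\<lambda>y. f y - ?u y"] EE_abs_resid[of mu f "- ?K"] unfolding glk by linarith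
    hence "EE mu (\<lambda>v. \<bar>?glk v\<bar>) / ?pm \<le> 2 * ?F / ?pm" using pm0 by (simp add: divide_right_mono)
    hence "(\<Sum>t\<in>{t\<in>TT grp k. PR mu (agree ?Gk t) \<noteq> 0}. \<bar>?glk (mrg grp k t y)\<bar>) \<le> 2 * ?F / ?pm" using sB by linarith
    hence "?d * (\<Sum>t\<in>{t\<in>TT grp k. PR mu (agree ?Gk t) \<noteq> 0}. \<bar>?glk (mrg grp k t y)\<bar>) \<le> ?d * (2 * ?F / ?pm)"
      using d0 by (rule mult_left_mono)
    thus ?thesis using dB by simp
  qed
  have mloc: "loc ?Gl mm" unfolding loc_def
  proof (intro allI impI)
    fix y y' :: "'n \<Rightarrow> bool" assume a: "\<forall>i\<in>?Gl. y i = y' i"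
    have "?glk (mrg grp k t y) = ?glk (mrg grp k t y')" for t
    proof -
      have "\<forall>i\<in>?K. mrg grp k t y i = mrg grp k t y' i" using a unfolding mrg_def by auto
      thus ?thesis using lglk unfolding loc_def by blast
    qed
    thus "mm y = mm y'" unfolding mm_def by simp
  qed

  let ?w = "\<lambda>y. ?vl y - ?u y"
  have wB: "\<bar>cond_exp mu ?Gl ?w x\<bar> \<le> ?B" if x: "x \<in> set_pmf mu" for x
  proof -
    have lw: "loc (- ?Gl) ?w"
      by (rule loc_diff[OF ce_loc loc_mono[OF ce_loc]]) auto
    have ew: "EE mu ?w = 0" unfolding EE_diff EE_ce by simp
    have c: "\<bar>cond_exp mu ?Gl ?w x\<bar> * PR mu (agree ?Gl x) \<le> ?d * EE mu (\<lambda>v. \<bar>?w v\<bar>)"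
      by (rule devC[OF _ supp_pos[OF x] lw ew]) (rule st.Dm[simplified])
    have "EE mu (\<lambda>v. \<bar>?w v\<bar>) \<le> 2 * ?F"
      using EE_abs_diff[of mu ?vl ?u] EE_abs_ce[of mu "- ?Gl" f] EE_abs_ce[of mu "- ?K" f] by linarith
    hence c2: "\<bar>cond_exp mu ?Gl ?w x\<bar> * PR mu (agree ?Gl x) \<le> ?d * (2 * ?F)"
      using c d0 by (meson mult_left_mono order_trans)
    have "?pm \<le> PR mu (agree ?Gl x)" by (rule st.pm1[OF supp_pos[OF x]])
    hence "\<bar>cond_exp mu ?Gl ?w x\<bar> * ?pm \<le> ?d * (2 * ?F)"
      using c2 by (meson abs_ge_zero mult_left_mono order_trans)
    thus ?thesis using pm0 by (simp add: pos_le_divide_eq)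
  qed

  have main: "\<bar>cond_exp mu ?H (\<lambda>y. ?glk y - ?gl y - ?gk y) x\<bar> \<le> 4 * ?B" if x: "x \<in> set_pmf mu" for x
  proof -
    have pH: "PR mu (agree ?H x) \<noteq> 0" by (rule supp_pos[OF x])
    have pl: "PR mu (agree ?Gl x) \<noteq> 0" by (rule supp_pos[OF x])
    have e1: "cond_exp mu ?H (\<lambda>y. ?glk y - ?gl y - ?gk y) x
        = cond_exp mu ?H ?glk x - cond_exp mu ?H ?gl x - cond_exp mu ?H ?gk x"
      by (simp only: ce_diff[of mu ?H "\<lambda>y. ?glk y - ?gl y" ?gk] ce_diff[of mu ?H ?glk ?gl])
    have e2: "cond_exp mu ?H ?gl x = ?gl x"
      by (rule ce_self[OF loc_mono[OF _ GlH] pH]) (simp only: gl ce_loc)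
    have e3: "\<bar>cond_exp mu ?H ?gk x\<bar> \<le> ?B"
    proof -
      have "cond_exp mu ?H ?gk x = cond_exp mu ?H (cond_exp mu (- ?Gk) ?gk) x" by (rule tower[OF HGk, symmetric])
      also have "\<bar>\<dots>\<bar> \<le> ?B" by (rule ce_bound[OF gkB B0])
      finally show ?thesis .
    qed
    have hm: "cond_exp mu ?H mm x = mm x" by (rule ce_self[OF loc_mono[OF mloc GlH] pH])
    have lm: "cond_exp mu ?Gl mm x = mm x" by (rule ce_self[OF mloc pl])
    have e4: "\<bar>cond_exp mu ?H ?glk x - mm x\<bar> \<le> ?B"
    proof -
      have "cond_exp mu ?H ?glk x - mm x = cond_exp mu ?H (\<lambda>y. cond_exp mu (- ?Gk) ?glk y - mm y) x"
        by (simp only: ce_diff[of mu ?H "cond_exp mu (- ?Gk) ?glk" mm] tower[OF HGk] hm)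
      also have "\<bar>\<dots>\<bar> \<le> ?B" by (rule ce_bound[OF RB B0])
      finally show ?thesis .
    qed
    have e5: "\<bar>cond_exp mu ?Gl ?glk x - mm x\<bar> \<le> ?B"
    proof -
      have "cond_exp mu ?Gl ?glk x - mm x = cond_exp mu ?Gl (\<lambda>y. cond_exp mu (- ?Gk) ?glk y - mm y) x"
        by (simp only: ce_diff[of mu ?Gl "cond_exp mu (- ?Gk) ?glk" mm] tower[OF GlGk] lm)
      also have "\<bar>\<dots>\<bar> \<le> ?B" by (rule ce_bound[OF RB B0])
      finally show ?thesis .
    qed
    have e6: "cond_exp mu ?Gl ?glk x - ?gl x = cond_exp mu ?Gl ?w x"
    proof -
      have "cond_exp mu ?Gl ?glk x = cond_exp mu ?Gl (\<lambda>y. f y - ?u y) x"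
        unfolding glk by (rule tower[OF GlK])
      thus ?thesis unfolding gl by (simp only: ce_diff)
    qed
    have "cond_exp mu ?H (\<lambda>y. ?glk y - ?gl y - ?gk y) x
        = (cond_exp mu ?H ?glk x - mm x) - (cond_exp mu ?Gl ?glk x - mm x) + cond_exp mu ?Gl ?w x
          - cond_exp mu ?H ?gk x"
      unfolding e1 e2 e6[symmetric] by simp
    thus ?thesis using e3 e4 e5 wB[OF x] by linarith
  qed
  have fin: "4 * ?B \<le> 8 * ?d * sqrt (EE mu (\<lambda>y. (f y)\<^sup>2)) / ?pm"
  proof -
    have "4 * ?B = 8 * ?d * ?F / ?pm" by simp
    also have "\<dots> \<le> 8 * ?d * sqrt (EE mu (\<lambda>y. (f y)\<^sup>2)) / ?pm"
      using EE_abs_sqrt[of mu f] d0 pm0 by (intro divide_right_mono mult_left_mono) auto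
    finally show ?thesis .
  qed
  show ?thesis unfolding AE_measure_pmf_iff exp_EE
    using main fin by (meson order_trans)
qed

end
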